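(* Let $\mathbf v=(v_1,\dots,v_m)$ and $\mathbf k=(k_1,\dots,k_m)$ be $m$-tuples of positive integers with $\mathbf v\ge\mathbf k$ and $\sum_i k_i\ge2$, and $\mathbf w=(w_1,\dots,w_n)$ and $\boldsymbol\ell=(\ell_1,\dots,\ell_n)$ be $n$-tuples of positive integers with $\mathbf w\ge\boldsymbol\ell$ and $\sum_i\ell_i\ge2$. Then \[ C(\mathrm{cat}(\mathbf v,\mathbf w),\mathrm{cat}(\mathbf k,\boldsymbol\ell),2)\ \le\ \max\{C(\mathbf v,\mathbf k,2),C(\mathbf w,\boldsymbol\ell,2)\}+\left(\max_{i=1,\dots,m}\left\lceil\frac{v_i}{k_i}\right\rceil\right)\left(\max_{i=1,\dots,n}\left\lceil\frac{w_i}{\ell_i}\right\rceil\right). \]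
   Context: $\mathrm{cat}(\mathbf a,\mathbf b)$ denotes concatenation of tuples. For tuples $\mathbf a,\mathbf b$ of positive integers of the same length $p$ with $\mathbf b\le\mathbf a$ entrywise: let $Y_1,\dots,Y_p$ be pairwise disjoint sets with $|Y_i|=a_i$; a block is a $p$-tuple $(B_1,\dots,B_p)$ with $B_i\subseteq Y_i$, $|B_i|=b_i$; a $p$-tuple of sets $(T_1,\dots,T_p)$ is $(\mathbf a,\mathbf b,2)$-admissible if $T_i\subseteq Y_i$, $|T_i|\le b_i$ and $\sum|T_i|=2$, and is contained in a block if $T_i\subseteq B_i$ for all $i$. A ${\rm GC}(\mathbf a,\mathbf b,2)$ is a finite family (repetitions allowed) of blocks containing every admissible tuple in at least one block; $C(\mathbf a,\mathbf b,2)$ is the minimum number of blocks. *)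

theory Defs
  imports Main Complex_Main
begin

text \<open>The p disjoint ground sets
Y_1..Y_p are modelled by index i (0-based) with Y_i = {..<a!i} tagged by i; a p-tuple
of sets is a function nat => nat set that is empty outside indices < p.\<close>

definition is_block :: "nat list \<Rightarrow> nat list \<Rightarrow> (nat \<Rightarrow> nat set) \<Rightarrow> bool" where
  "is_block a b B \<longleftrightarrow>
     (\<forall>i<length a. B i \<subseteq> {..<a!i} \<and> card (B i) = b!i) \<and> (\<forall>i\<ge>length a. B i = {})"

definition admissible :: "nat list \<Rightarrow> nat list \<Rightarrow> nat \<Rightarrow> (nat \<Rightarrow> nat set) \<Rightarrow> bool" where
  "admissible a b t T \<longleftrightarrow>
     (\<forall>i<length a. T i \<subseteq> {..<a!i} \<and> card (T i) \<le> b!i) \<and> (\<forall>i\<ge>length a. T i = {}) \<and>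
     (\<Sum>i<length a. card (T i)) = t"

definition contained_in :: "(nat \<Rightarrow> nat set) \<Rightarrow> (nat \<Rightarrow> nat set) \<Rightarrow> bool" where
  "contained_in T B \<longleftrightarrow> (\<forall>i. T i \<subseteq> B i)"

text \<open>A GC(a,b,t): a finite family (list, repetitions allowed) of blocks covering every
admissible tuple.\<close>
definition is_GC :: "nat list \<Rightarrow> nat list \<Rightarrow> nat \<Rightarrow> (nat \<Rightarrow> nat set) list \<Rightarrow> bool" where
  "is_GC a b t Bs \<longleftrightarrow> (\<forall>B\<in>set Bs. is_block a b B) \<and>
     (\<forall>T. admissible a b t T \<longrightarrow> (\<exists>B\<in>set Bs. contained_in T B))"

definition C :: "nat list \<Rightarrow> nat list \<Rightarrow> nat \<Rightarrow> nat" where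
  "C a b t = (LEAST N. \<exists>Bs. is_GC a b t Bs \<and> length Bs = N)"

end

theory Submission
  imports Defs "HOL-Library.FuncSet"
begin

definition comb :: "nat \<Rightarrow> (nat \<Rightarrow> nat set) \<Rightarrow> (nat \<Rightarrow> nat set) \<Rightarrow> (nat \<Rightarrow> nat set)" where
  "comb m B1 B2 = (\<lambda>i. if i < m then B1 i else B2 (i - m))"

lemma comb_block:
  assumes "length k = length v" "length l = length w" "is_block v k B1" "is_block w l B2"
  shows "is_block (v@w) (k@l) (comb (length v) B1 B2)"
  using assms unfolding is_block_def comb_def
  by (auto simp: nth_append)

lemma gc_exists:
  assumes "length b = length a" "\<forall>i<length a. b!i \<le> a!i"
  shows "\<exists>Bs. is_GC a b t Bs"
proof -
  let ?S = "{B. is_block a b B}"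
  have fin: "finite ?S"
  proof (rule finite_subset)
    show "?S \<subseteq> (\<lambda>f i. if i < length a then f i else {}) ` (PiE {..<length a} (\<lambda>i. Pow {..<a!i}))"
    proof
      fix B assume "B \<in> ?S"
      hence B: "is_block a b B" by simp
      have "B = (\<lambda>i. if i < length a then (restrict B {..<length a}) i else {})"
        using B by (intro ext) (auto simp: is_block_def not_less restrict_apply)
      moreover have "restrict B {..<length a} \<in> PiE {..<length a} (\<lambda>i. Pow {..<a!i})"
        using B by (auto simp: is_block_def)
      ultimately show "B \<in> (\<lambda>f i. if i < length a then f i else {}) ` (PiE {..<length a} (\<lambda>i. Pow {..<a!i}))"
        by blast
    qed
    show "finite ((\<lambda>f i. if i < length a then f i else {}) ` (PiE {..<length a} (\<lambda>i. Pow {..<a!i})))"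
      by (intro finite_imageI finite_PiE) auto
  qed
  obtain xs where xs: "set xs = ?S" using finite_list[OF fin] by blast
  have "is_GC a b t xs" unfolding is_GC_def
  proof (intro conjI allI impI)
    show "\<forall>B\<in>set xs. is_block a b B" using xs by simp
    fix T assume T: "admissible a b t T"
    have "\<forall>i. \<exists>Y. i < length a \<longrightarrow> T i \<subseteq> Y \<and> Y \<subseteq> {..<a!i} \<and> card Y = b!i"
    proof
      fix i show "\<exists>Y. i < length a \<longrightarrow> T i \<subseteq> Y \<and> Y \<subseteq> {..<a!i} \<and> card Y = b!i"
      proof (cases "i < length a")
        case True
        then have "T i \<subseteq> {..<a!i}" "card (T i) \<le> b!i" using T by (auto simp: admissible_def)
        then show ?thesis using exists_subset_between[of "T i" "b!i" "{..<a!i}"] assms True by auto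
      qed auto
    qed
    then obtain Y where Y: "\<And>i. i < length a \<Longrightarrow> T i \<subseteq> Y i \<and> Y i \<subseteq> {..<a!i} \<and> card (Y i) = b!i"
      by metis
    define B where "B = (\<lambda>i. if i < length a then Y i else {})"
    have "is_block a b B" using Y by (auto simp: is_block_def B_def)
    moreover have "contained_in T B" using Y T by (auto simp: contained_in_def B_def admissible_def)
    ultimately show "\<exists>B\<in>set xs. contained_in T B" using xs by auto
  qed
  thus ?thesis by blast
qed

lemma C_spec:
  assumes "length b = length a" "\<forall>i<length a. b!i \<le> a!i"
  shows "\<exists>Bs. is_GC a b t Bs \<and> length Bs = C a b t"
proof -
  obtain Bs where "is_GC a b t Bs" using gc_exists[OF assms] by blast
  hence "\<exists>N Bs. is_GC a b t Bs \<and> length Bs = N" by blast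
  hence "\<exists>Bs. is_GC a b t Bs \<and> length Bs = (LEAST N. \<exists>Bs. is_GC a b t Bs \<and> length Bs = N)"
    by (rule LeastI_ex)
  thus ?thesis by (simp add: C_def)
qed

lemma C_le: "is_GC a b t Bs \<Longrightarrow> C a b t \<le> length Bs"
  unfolding C_def by (rule Least_le) blast

lemma cover_pts:
  assumes "length b = length a" "\<forall>i<length a. 0 < b!i \<and> b!i \<le> a!i"
  shows "\<exists>Ps. length Ps = (MAX i\<in>{..<length a}. nat \<lceil>real (a!i) / real (b!i)\<rceil>)
     \<and> (\<forall>P\<in>set Ps. is_block a b P) \<and> (\<forall>i<length a. \<forall>x<a!i. \<exists>P\<in>set Ps. x \<in> P i)"
proof -
  define M where "M = (MAX i\<in>{..<length a}. nat \<lceil>real (a!i) / real (b!i)\<rceil>)"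
  define st where "st s i = min (s * b!i) (a!i - b!i)" for s i
  define Ps where "Ps = map (\<lambda>s i. if i < length a then {st s i..<st s i + b!i} else {}) [0..<M]"
  have "length Ps = M" by (simp add: Ps_def)
  moreover have "\<forall>P\<in>set Ps. is_block a b P"
  proof
    fix P assume "P \<in> set Ps"
    then obtain s where P: "P = (\<lambda>i. if i < length a then {st s i..<st s i + b!i} else {})"
      by (auto simp: Ps_def)
    have le: "\<And>i. i < length a \<Longrightarrow> st s i + b!i \<le> a!i" using assms by (auto simp: st_def)
    have "\<And>i. i < length a \<Longrightarrow> {st s i..<st s i + b!i} \<subseteq> {..<a!i}"
    proof
      fix i x assume "i < length a" "x \<in> {st s i..<st s i + b!i}"
      then show "x \<in> {..<a!i}" using le[of i] by simp
    qed
    then show "is_block a b P" unfolding P is_block_def by simp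
  qed
  moreover have "\<forall>i<length a. \<forall>x<a!i. \<exists>P\<in>set Ps. x \<in> P i"
  proof (intro allI impI)
    fix i x assume i: "i < length a" and x: "x < a!i"
    define s where "s = x div b!i"
    have bpos: "0 < b!i" "b!i \<le> a!i" using assms i by auto
    have sb: "s * b!i \<le> x" by (simp add: s_def div_times_less_eq_dividend)
    have sb2: "x < s * b!i + b!i"
    proof -
      have "x = s * b!i + x mod b!i" unfolding s_def by (rule div_mult_mod_eq[symmetric])
      moreover have "x mod b!i < b!i" using bpos(1) by simp
      ultimately show ?thesis by linarith
    qed
    have "real s * real (b!i) < real (a!i)"
    proof -
      have "s * b!i < a!i" using sb x by linarith
      then show ?thesis by (metis of_nat_less_iff of_nat_mult)
    qed
    hence "real s < real (a!i) / real (b!i)" using bpos by (simp add: field_simps)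
    also have "\<dots> \<le> of_int \<lceil>real (a!i) / real (b!i)\<rceil>" by (rule le_of_int_ceiling)
    finally have "s < nat \<lceil>real (a!i) / real (b!i)\<rceil>" by linarith
    also have "\<dots> \<le> M" unfolding M_def by (rule Max_ge) (use i in auto)
    finally have sM: "s < M" .
    have xin: "x \<in> {st s i..<st s i + b!i}" using sb sb2 x bpos by (auto simp: st_def)
    have "Ps ! s = (\<lambda>i. if i < length a then {st s i..<st s i + b!i} else {})"
    proof -
      have u: "[0..<M]!s = s" using sM by simp
      have l: "s < length [0..<M]" using sM by simp
      show ?thesis unfolding Ps_def nth_map[OF l] u ..
    qed
    moreover have "Ps ! s \<in> set Ps" using sM by (intro nth_mem) (simp add: Ps_def)
    ultimately show "\<exists>P\<in>set Ps. x \<in> P i" using xin i by (intro bexI[of _ "Ps ! s"]) simp_all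
  qed
  ultimately show ?thesis unfolding M_def by (intro exI[of _ Ps]) simp
qed

lemma sum_split_add: "sum f {..<m+n} = sum f {..<m} + (\<Sum>j<n. f (j+m)) "
  for f :: "nat \<Rightarrow> nat"
  by (induction n) (auto simp: add.commute)

lemma sum_one:
  fixes f :: "nat \<Rightarrow> nat"
  assumes "finite A" "sum f A = 1"
  shows "\<exists>i0\<in>A. f i0 = 1 \<and> (\<forall>i\<in>A. i \<noteq> i0 \<longrightarrow> f i = 0)"
proof -
  obtain i0 where i0: "i0 \<in> A" "f i0 \<noteq> 0" using assms(2) sum.neutral by (metis zero_neq_one)
  have "sum f A = f i0 + sum f (A - {i0})" using assms(1) i0(1) by (simp add: sum.remove)
  hence "f i0 = 1" "sum f (A - {i0}) = 0" using assms(2) i0(2) by auto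
  thus ?thesis using i0(1) assms(1) by auto
qed


theorem corollary6p4:
  fixes v k w l :: "nat list"
  assumes "length k = length v" and "length l = length w"
    and "\<forall>i<length v. 0 < k!i \<and> k!i \<le> v!i"
    and "\<forall>i<length w. 0 < l!i \<and> l!i \<le> w!i"
    and "sum_list k \<ge> 2" and "sum_list l \<ge> 2"
  shows "C (v @ w) (k @ l) 2 \<le> max (C v k 2) (C w l 2)
           + (MAX i\<in>{..<length v}. nat \<lceil>real (v!i) / real (k!i)\<rceil>)
           * (MAX i\<in>{..<length w}. nat \<lceil>real (w!i) / real (l!i)\<rceil>)"
proof -
  define m where "m = length v"
  define n where "n = length w"
  define M1 where "M1 = (MAX i\<in>{..<length v}. nat \<lceil>real (v!i) / real (k!i)\<rceil>)"
  define M2 where "M2 = (MAX i\<in>{..<length w}. nat \<lceil>real (w!i) / real (l!i)\<rceil>)"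
  define C1 where "C1 = C v k 2"
  define C2 where "C2 = C w l 2"
  obtain Bs1 where B1: "is_GC v k 2 Bs1" "length Bs1 = C1"
    using C_spec[of k v 2] assms(1,3) unfolding C1_def by auto
  obtain Bs2 where B2: "is_GC w l 2 Bs2" "length Bs2 = C2"
    using C_spec[of l w 2] assms(2,4) unfolding C2_def by auto
  obtain Ps where Ps: "length Ps = M1" "\<forall>P\<in>set Ps. is_block v k P"
      "\<forall>i<length v. \<forall>x<v!i. \<exists>P\<in>set Ps. x \<in> P i"
    using cover_pts[of k v] assms(1,3) unfolding M1_def by blast
  obtain Qs where Qs: "length Qs = M2" "\<forall>Q\<in>set Qs. is_block w l Q"
      "\<forall>i<length w. \<forall>x<w!i. \<exists>Q\<in>set Qs. x \<in> Q i"
    using cover_pts[of l w] assms(2,4) unfolding M2_def by blast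
  define D1 where "D1 = (\<lambda>i. if i < m then {..<k!i} else ({}::nat set))"
  define D2 where "D2 = (\<lambda>i. if i < n then {..<l!i} else ({}::nat set))"
  have D1b: "is_block v k D1" using assms(3) by (auto simp: D1_def is_block_def m_def)
  have D2b: "is_block w l D2" using assms(4) by (auto simp: D2_def is_block_def n_def)
  define L1 where "L1 = map (\<lambda>j. comb m (if j < C1 then Bs1!j else D1) (if j < C2 then Bs2!j else D2)) [0..<max C1 C2]"
  define L2 where "L2 = concat (map (\<lambda>P. map (\<lambda>Q. comb m P Q) Qs) Ps)"
  have lenL2: "length L2 = M1 * M2"
    by (simp add: L2_def length_concat comp_def Ps(1) Qs(1) sum_list_triv)
  have inL1a: "\<And>j. j < C1 \<Longrightarrow> comb m (Bs1!j) (if j < C2 then Bs2!j else D2) \<in> set L1"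
  proof -
    fix j assume j: "j < C1"
    have "L1 ! j = comb m (Bs1!j) (if j < C2 then Bs2!j else D2)" using j by (simp add: L1_def)
    moreover have "L1 ! j \<in> set L1" using j by (intro nth_mem) (simp add: L1_def)
    ultimately show "comb m (Bs1!j) (if j < C2 then Bs2!j else D2) \<in> set L1" by simp
  qed
  have inL1b: "\<And>j. j < C2 \<Longrightarrow> comb m (if j < C1 then Bs1!j else D1) (Bs2!j) \<in> set L1"
  proof -
    fix j assume j: "j < C2"
    have "L1 ! j = comb m (if j < C1 then Bs1!j else D1) (Bs2!j)" using j by (simp add: L1_def)
    moreover have "L1 ! j \<in> set L1" using j by (intro nth_mem) (simp add: L1_def)
    ultimately show "comb m (if j < C1 then Bs1!j else D1) (Bs2!j) \<in> set L1" by simp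
  qed
  have blk1: "\<forall>B\<in>set Bs1. is_block v k B" using B1(1) by (simp add: is_GC_def)
  have blk2: "\<forall>B\<in>set Bs2. is_block w l B" using B2(1) by (simp add: is_GC_def)
  have blocks: "\<forall>B\<in>set (L1 @ L2). is_block (v@w) (k@l) B"
  proof
    fix B assume "B \<in> set (L1 @ L2)"
    then consider (a) j where "j < max C1 C2" "B = comb m (if j < C1 then Bs1!j else D1) (if j < C2 then Bs2!j else D2)"
      | (b) P Q where "P \<in> set Ps" "Q \<in> set Qs" "B = comb m P Q"
      unfolding L1_def L2_def by auto
    then show "is_block (v@w) (k@l) B"
    proof cases
      case a
      have "is_block v k (if j < C1 then Bs1!j else D1)" using blk1 D1b B1(2) by auto
      moreover have "is_block w l (if j < C2 then Bs2!j else D2)" using blk2 D2b B2(2) by auto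
      ultimately show ?thesis using a comb_block assms(1,2) m_def by metis
    next
      case b
      then show ?thesis using comb_block assms(1,2) m_def Ps(2) Qs(2) by metis
    qed
  qed
  have cov: "\<forall>T. admissible (v@w) (k@l) 2 T \<longrightarrow> (\<exists>B\<in>set (L1 @ L2). contained_in T B)"
  proof (intro allI impI)
    fix T assume adm: "admissible (v@w) (k@l) 2 T"
    have Tv: "\<And>i. i < m \<Longrightarrow> T i \<subseteq> {..<v!i} \<and> card (T i) \<le> k!i"
    proof -
      fix i assume i: "i < m"
      then have "i < length (v@w)" by (simp add: m_def)
      then have "T i \<subseteq> {..<(v@w)!i} \<and> card (T i) \<le> (k@l)!i"
        using adm by (simp add: admissible_def)
      then show "T i \<subseteq> {..<v!i} \<and> card (T i) \<le> k!i"
        using i assms(1) by (simp add: nth_append m_def)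
    qed
    have Tw: "\<And>j. j < n \<Longrightarrow> T (j+m) \<subseteq> {..<w!j} \<and> card (T (j+m)) \<le> l!j"
    proof -
      fix j assume j: "j < n"
      then have "j + m < length (v@w)" by (simp add: m_def n_def)
      then have "T (j+m) \<subseteq> {..<(v@w)!(j+m)} \<and> card (T (j+m)) \<le> (k@l)!(j+m)"
        using adm by (simp add: admissible_def)
      then show "T (j+m) \<subseteq> {..<w!j} \<and> card (T (j+m)) \<le> l!j"
        using j assms(1) by (simp add: nth_append m_def)
    qed
    have Tout: "\<And>i. i \<ge> m + n \<Longrightarrow> T i = {}"
      using adm by (simp add: admissible_def m_def n_def)
    have Tsum: "(\<Sum>i<m+n. card (T i)) = 2"
      using adm by (simp add: admissible_def m_def n_def)
    define s1 where "s1 = (\<Sum>i<m. card (T i))"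
    define s2 where "s2 = (\<Sum>j<n. card (T (j+m)))"
    have s12: "s1 + s2 = 2" using Tsum sum_split_add[of "\<lambda>i. card (T i)" m n] by (simp add: s1_def s2_def)
    have finv: "\<And>i. i < m \<Longrightarrow> finite (T i)" using Tv finite_subset by blast
    have finw: "\<And>j. j < n \<Longrightarrow> finite (T (j+m))" using Tw finite_subset by blast
    have z1: "s1 = 0 \<Longrightarrow> \<forall>i<m. T i = {}" using finv by (simp add: s1_def)
    have z2: "s2 = 0 \<Longrightarrow> \<forall>j<n. T (j+m) = {}" using finw by (simp add: s2_def)
    have Tw': "\<And>i. m \<le> i \<Longrightarrow> i < m + n \<Longrightarrow> T i = T ((i - m) + m)" by simp
    consider "s1 = 2" "s2 = 0" | "s1 = 0" "s2 = 2" | "s1 = 1" "s2 = 1" using s12 by linarith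
    then show "\<exists>B\<in>set (L1 @ L2). contained_in T B"
    proof cases
      case 1
      define T1 where "T1 = (\<lambda>i. if i < m then T i else {})"
      have "admissible v k 2 T1"
        using Tv 1(1) unfolding admissible_def T1_def s1_def m_def by auto
      then obtain B where B: "B \<in> set Bs1" "contained_in T1 B" using B1(1) by (auto simp: is_GC_def)
      then obtain j where j: "j < C1" "B = Bs1!j" using B1(2) by (metis in_set_conv_nth)
      have "contained_in T (comb m B (if j < C2 then Bs2!j else D2))"
        unfolding contained_in_def comb_def
      proof
        fix i show "T i \<subseteq> (if i < m then B i else (if j < C2 then Bs2!j else D2) (i - m))"
        proof (cases "i < m")
          case True then show ?thesis using B(2) unfolding contained_in_def T1_def by (metis (full_types))
        next
          case False
          show ?thesis
          proof (cases "i < m + n")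
            case True
            then have "T i = {}" using z2[OF 1(2)] False Tw'[of i] by (metis add_diff_inverse_nat less_diff_conv2 not_less add.commute)
            then show ?thesis by simp
          next
            case False2: False then show ?thesis using Tout by simp
          qed
        qed
      qed
      then show ?thesis using inL1a[OF j(1)] j(2) by auto
    next
      case 2
      define T2 where "T2 = (\<lambda>j. if j < n then T (j+m) else {})"
      have "admissible w l 2 T2"
        using Tw 2(2) unfolding admissible_def T2_def s2_def n_def by auto
      then obtain B where B: "B \<in> set Bs2" "contained_in T2 B" using B2(1) by (auto simp: is_GC_def)
      then obtain j where j: "j < C2" "B = Bs2!j" using B2(2) by (metis in_set_conv_nth)
      have "contained_in T (comb m (if j < C1 then Bs1!j else D1) B)"
        unfolding contained_in_def comb_def
      proof
        fix i show "T i \<subseteq> (if i < m then (if j < C1 then Bs1!j else D1) i else B (i - m))"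
        proof (cases "i < m")
          case True then show ?thesis using z1[OF 2(1)] by simp
        next
          case False
          show ?thesis
          proof (cases "i < m + n")
            case True
            then have "i - m < n" using False by linarith
            then have "T i = T2 (i - m)" using False by (simp add: T2_def)
            then show ?thesis using B(2) False by (simp add: contained_in_def)
          next
            case False2: False then show ?thesis using Tout by simp
          qed
        qed
      qed
      then show ?thesis using inL1b[OF j(1)] j(2) by auto
    next
      case 3
      obtain i0 where i0: "i0 < m" "card (T i0) = 1" "\<forall>i<m. i \<noteq> i0 \<longrightarrow> card (T i) = 0"
        using sum_one[of "{..<m}" "\<lambda>i. card (T i)"] 3(1) unfolding s1_def by auto
      obtain j0 where j0: "j0 < n" "card (T (j0+m)) = 1" "\<forall>j<n. j \<noteq> j0 \<longrightarrow> card (T (j+m)) = 0"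
        using sum_one[of "{..<n}" "\<lambda>j. card (T (j+m))"] 3(2) unfolding s2_def by auto
      obtain x where x: "T i0 = {x}" using i0(2) card_1_singletonE by blast
      obtain y where y: "T (j0+m) = {y}" using j0(2) card_1_singletonE by blast
      have xv: "x < v!i0" using Tv[OF i0(1)] x by auto
      have yw: "y < w!j0" using Tw[OF j0(1)] y by auto
      obtain P where P: "P \<in> set Ps" "x \<in> P i0" using Ps(3) i0(1) xv m_def by blast
      obtain Q where Q: "Q \<in> set Qs" "y \<in> Q j0" using Qs(3) j0(1) yw n_def by blast
      have e1: "\<And>i. i < m \<Longrightarrow> i \<noteq> i0 \<Longrightarrow> T i = {}" using i0(3) finv by auto
      have e2: "\<And>j. j < n \<Longrightarrow> j \<noteq> j0 \<Longrightarrow> T (j+m) = {}" using j0(3) finw by auto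
      have "contained_in T (comb m P Q)"
        unfolding contained_in_def comb_def
      proof
        fix i show "T i \<subseteq> (if i < m then P i else Q (i - m))"
        proof (cases "i < m")
          case True then show ?thesis using P x e1[of i] by (cases "i = i0") auto
        next
          case False
          show ?thesis
          proof (cases "i < m + n")
            case True
            then have ii: "i - m < n" "T i = T ((i - m) + m)" using False by auto
            then show ?thesis using Q y e2[of "i - m"] False by (cases "i - m = j0") auto
          next
            case False2: False then show ?thesis using Tout by simp
          qed
        qed
      qed
      moreover have "comb m P Q \<in> set L2" using P(1) Q(1) by (auto simp: L2_def)
      ultimately show ?thesis by auto
    qed
  qed
  have "is_GC (v@w) (k@l) 2 (L1 @ L2)" using blocks cov by (simp add: is_GC_def)
  hence "C (v@w) (k@l) 2 \<le> length (L1 @ L2)" by (rule C_le)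
  also have "\<dots> = max C1 C2 + M1 * M2" using lenL2 by (simp add: L1_def)
  finally show ?thesis unfolding C1_def C2_def M1_def M2_def .
qed

end
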